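(* Let $x\in[n]$ be $b$-above, $c=T[x]$ and $i=\mathrm{bwt}(x)$. For every $c$-run break $j>i+b+1$ and every $j'\in\{j-1,j\}$ with $\mathrm{BWT}_r[j']=c$, $$\big|\mathrm{lcs}\big(T[\mathrm{text}(j')-\mathrm{LCP}_r[j],\mathrm{text}(j')],\,T[1,x]\big)\big|\le\big|\mathrm{lcs}\big(T[1,x],\,T[\mathrm{text}(i+b)-\mathrm{LCP}_r[i+b+1],\mathrm{text}(i+b)]\big)\big|.$$
   Context: Let $T=T[1,n]\in\Sigma^n$, $n\ge2$, over $\Sigma=\{1,\dots,\sigma\}$, with $T[1]=\$$ the smallest character, occurring only at position 1, and every character of $\Sigma$ occurring in $T$. $T[i,j]=T[i]\cdots T[j]$ (empty if $i>j$). Let $\overleftarrow T=T[n]\cdots T[1]$; $\mathrm{SA}_r$ is the suffix array of $\overleftarrow T$; $\mathrm{LCP}_r[1]=0$ and for $i\ge2$, $\mathrm{LCP}_r[i]$ is the length of the longest common prefix of the suffixes of $\overleftarrow T$ starting at $\mathrm{SA}_r[i-1]$ and $\mathrm{SA}_r[i]$; $\mathrm{BWT}_r[i]=\overleftarrow T[\mathrm{SA}_r[i]-1]$ if $\mathrm{SA}_r[i]>1$, else $\overleftarrow T[n]$. $\mathrm{text}(i)=n-\mathrm{SA}_r[i]+1$, $\mathrm{bwt}(x)=\mathrm{SA}_r^{-1}[n+1-x]$. $\mathrm{lcs}(\alpha,\beta)$ is the longest common suffix of strings $\alpha,\beta$ and $|\cdot|$ denotes length. For $i\in[2,n]$, $c\in\Sigma$,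 $i$ is a $c$-run break if $\mathrm{BWT}_r[i-1]\ne\mathrm{BWT}_r[i]$ and $c\in\{\mathrm{BWT}_r[i-1],\mathrm{BWT}_r[i]\}$. With $i=\mathrm{bwt}(x)$, $x$ is $b$-above if $b\in[0,n-i-1]$ and $\mathrm{BWT}_r[i]=\dots=\mathrm{BWT}_r[i+b]\ne\mathrm{BWT}_r[i+b+1]$. *)

theory Defs
  imports Main "HOL-Library.List_Lexorder"
begin

(* Strings are nat lists; paper positions are 1-based: T[k] = T ! (k-1).
   The reversed text is rev T. *)

definition chr :: "nat list \<Rightarrow> nat \<Rightarrow> nat" where
  "chr S k = S ! (k - 1)"

(* T[i,j] (1-based, empty if i > j) *)
definition substr :: "nat list \<Rightarrow> nat \<Rightarrow> nat \<Rightarrow> nat list" where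
  "substr S i j = take (Suc j - i) (drop (i - 1) S)"

fun lcp :: "nat list \<Rightarrow> nat list \<Rightarrow> nat list" where
  "lcp (x # xs) (y # ys) = (if x = y then x # lcp xs ys else [])"
| "lcp _ _ = []"

definition lcs :: "nat list \<Rightarrow> nat list \<Rightarrow> nat list" where
  "lcs a b = rev (lcp (rev a) (rev b))"

definition rsuf :: "nat list \<Rightarrow> nat \<Rightarrow> nat list" where
  "rsuf T p = drop (p - 1) (rev T)"

(* suffix array SA_r of rev T (1-based index i, values in 1..n),
   lexicographic order (proper prefix smaller) *)
definition SA_r :: "nat list \<Rightarrow> nat \<Rightarrow> nat" where
  "SA_r T i = sort_key (rsuf T) [1..<Suc (length T)] ! (i - 1)"

definition SA_r_inv :: "nat list \<Rightarrow> nat \<Rightarrow> nat" where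
  "SA_r_inv T p = (THE i. i \<in> {1..length T} \<and> SA_r T i = p)"

definition LCP_r :: "nat list \<Rightarrow> nat \<Rightarrow> nat" where
  "LCP_r T i = (if i \<le> 1 then 0
      else length (lcp (rsuf T (SA_r T (i - 1))) (rsuf T (SA_r T i))))"

definition BWT_r :: "nat list \<Rightarrow> nat \<Rightarrow> nat" where
  "BWT_r T i = (if SA_r T i > 1 then chr (rev T) (SA_r T i - 1)
                else chr (rev T) (length T))"

definition textpos :: "nat list \<Rightarrow> nat \<Rightarrow> nat" where
  "textpos T i = length T - SA_r T i + 1"

definition bwt :: "nat list \<Rightarrow> nat \<Rightarrow> nat" where
  "bwt T x = SA_r_inv T (length T + 1 - x)"

definition run_break :: "nat list \<Rightarrow> nat \<Rightarrow> nat \<Rightarrow> bool" where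
  "run_break T c i \<longleftrightarrow> 2 \<le> i \<and> i \<le> length T \<and> BWT_r T (i - 1) \<noteq> BWT_r T i
      \<and> c \<in> {BWT_r T (i - 1), BWT_r T i}"

(* x is b-above; b \<in> [0, n-i-1] is written i + b + 1 \<le> n *)
definition b_above :: "nat list \<Rightarrow> nat \<Rightarrow> nat \<Rightarrow> bool" where
  "b_above T b x \<longleftrightarrow> (let i = bwt T x in
      i + b + 1 \<le> length T \<and> (\<forall>k\<in>{i..i+b}. BWT_r T k = BWT_r T i)
      \<and> BWT_r T (i + b) \<noteq> BWT_r T (i + b + 1))"

(* standing assumptions on the text: alphabet {1..sigma}, $ = 1 smallest,
   occurring only at position 1, every character occurs, n \<ge> 2 *)
definition valid_text :: "nat \<Rightarrow> nat list \<Rightarrow> bool" where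
  "valid_text \<sigma> T \<longleftrightarrow> length T \<ge> 2 \<and> set T = {1..\<sigma>} \<and> chr T 1 = 1
      \<and> (\<forall>k\<in>{2..length T}. chr T k \<noteq> 1)"

end

theory Submission
  imports Defs
begin

lemma lcp_comm: "lcp a b = lcp b a"
  by (induction a b rule: lcp.induct) auto

lemma lcp_take1: "lcp a b = take (length (lcp a b)) a"
  by (induction a b rule: lcp.induct) auto

lemma lcp_take2: "lcp a b = take (length (lcp a b)) b"
  by (induction a b rule: lcp.induct) auto

lemma lcp_len1: "length (lcp a b) \<le> length a"
  by (induction a b rule: lcp.induct) auto

lemma lcp_len2: "length (lcp a b) \<le> length b"
  by (induction a b rule: lcp.induct) auto

lemma lcp_take_arg: "length (lcp a (take m b)) = min (length (lcp a b)) m"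
proof (induction a b arbitrary: m rule: lcp.induct)
  case (1 x xs y ys)
  then show ?case by (cases m) auto
next
  case ("2_1" v)
  then show ?case by simp
next
  case ("2_2" v)
  then show ?case by simp
qed

lemma lcp_sandwich:
  fixes a b c :: "nat list"
  shows "a \<le> b \<Longrightarrow> b \<le> c \<Longrightarrow>
     length (lcp a c) \<le> length (lcp a b) \<and> length (lcp a c) \<le> length (lcp b c)"
proof (induction a arbitrary: b c)
  case Nil
  then show ?case by simp
next
  case (Cons x a')
  show ?case
  proof (cases b)
    case Nil
    then show ?thesis using Cons.prems by simp
  next
    case (Cons y b')
    show ?thesis
    proof (cases c)
      case Nil
      then show ?thesis using Cons.prems \<open>b = y # b'\<close> by simp
    next
      case (Cons z c')
      show ?thesis
      proof (cases "x = z")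
        case False
        then show ?thesis using \<open>c = z # c'\<close> by simp
      next
        case True
        have "x = y" "a' \<le> b'" "b' \<le> c'"
          using Cons.prems \<open>b = y # b'\<close> \<open>c = z # c'\<close> True by auto
        then show ?thesis using Cons.IH[of b' c'] \<open>b = y # b'\<close> \<open>c = z # c'\<close> True by simp
      qed
    qed
  qed
qed


definition sl :: "nat list \<Rightarrow> nat list" where
  "sl T = sort_key (rsuf T) [1..<Suc (length T)]"

lemma sl_props: "length (sl T) = length T" "distinct (sl T)" "set (sl T) = {1..length T}"
  "sorted (map (rsuf T) (sl T))"
proof -
  show "length (sl T) = length T" unfolding sl_def by (cases "length T") auto
  show "distinct (sl T)" unfolding sl_def by simp
  show "set (sl T) = {1..length T}" unfolding sl_def by auto
  show "sorted (map (rsuf T) (sl T))" unfolding sl_def by (rule sorted_sort_key)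
qed

lemma SA_eq: "SA_r T k = sl T ! (k - 1)"
  unfolding SA_r_def sl_def by simp

lemma SA_range: "k \<in> {1..length T} \<Longrightarrow> SA_r T k \<in> {1..length T}"
proof -
  assume k: "k \<in> {1..length T}"
  then have "k - 1 < length (sl T)" using sl_props(1)[of T] by auto
  then have "sl T ! (k - 1) \<in> set (sl T)" by (rule nth_mem)
  then show ?thesis using sl_props(3)[of T] by (simp add: SA_eq)
qed

lemma SA_inj: "k \<in> {1..length T} \<Longrightarrow> l \<in> {1..length T} \<Longrightarrow> SA_r T k = SA_r T l \<Longrightarrow> k = l"
proof -
  assume k: "k \<in> {1..length T}" and l: "l \<in> {1..length T}" and e: "SA_r T k = SA_r T l"
  have "k - 1 < length (sl T)" "l - 1 < length (sl T)" using k l sl_props(1)[of T] by auto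
  then have "k - 1 = l - 1" using e sl_props(2)[of T] nth_eq_iff_index_eq by (fastforce simp: SA_eq)
  then show ?thesis using k l by auto
qed

lemma SA_sorted: "1 \<le> k \<Longrightarrow> k \<le> l \<Longrightarrow> l \<le> length T \<Longrightarrow>
   rsuf T (SA_r T k) \<le> rsuf T (SA_r T l)"
proof -
  assume a: "1 \<le> k" "k \<le> l" "l \<le> length T"
  have "map (rsuf T) (sl T) ! (k - 1) \<le> map (rsuf T) (sl T) ! (l - 1)"
    using sl_props(1,4)[of T] a by (intro sorted_nth_mono) auto
  then show ?thesis using a sl_props(1)[of T] by (simp add: SA_eq)
qed

lemma bwt_props:
  assumes "x \<in> {1..length T}"
  shows "bwt T x \<in> {1..length T} \<and> SA_r T (bwt T x) = length T + 1 - x"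
proof -
  let ?p = "length T + 1 - x"
  have "?p \<in> set (sl T)" using assms sl_props(3)[of T] by auto
  then obtain idx where idx: "idx < length T" "sl T ! idx = ?p"
    using sl_props(1)[of T] by (metis in_set_conv_nth)
  have ex: "Suc idx \<in> {1..length T} \<and> SA_r T (Suc idx) = ?p" using idx by (simp add: SA_eq)
  have "(THE i. i \<in> {1..length T} \<and> SA_r T i = ?p) = Suc idx"
    using ex SA_inj[of _ T "Suc idx"] by (intro the_equality) auto
  then show ?thesis using ex unfolding bwt_def SA_r_inv_def by simp
qed

lemma rsuf_len: "p \<in> {1..length T} \<Longrightarrow> length (rsuf T p) = length T - p + 1"
  unfolding rsuf_def by auto

lemma rsuf_lcp_lt:
  assumes v: "valid_text \<sigma> T" and p: "p \<in> {1..length T}" and q: "q \<in> {1..length T}"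
    and ne: "p \<noteq> q"
  shows "length (lcp (rsuf T p) (rsuf T q)) < length (rsuf T p)"
proof (rule ccontr)
  let ?a = "rsuf T p" and ?b = "rsuf T q"
  let ?n = "length T"
  assume "\<not> ?thesis"
  then have eq: "length (lcp ?a ?b) = length ?a" using lcp_len1[of ?a ?b] by simp
  then have "?a = take (length ?a) ?b" using lcp_take1[of ?a ?b] lcp_take2[of ?a ?b] by simp
  moreover have "length ?a \<le> length ?b" using eq lcp_len2[of ?a ?b] by simp
  ultimately have qp: "q < p" using p q ne rsuf_len[OF p] rsuf_len[OF q] by auto
  have lt: "?n - p < length ?a" using p rsuf_len[OF p] by auto
  have nth: "?a ! (?n - p) = ?b ! (?n - p)"
    using \<open>?a = take (length ?a) ?b\<close> lt by (metis nth_take)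
  have "?a ! (?n - p) = rev T ! (p - 1 + (?n - p))" unfolding rsuf_def
    using p by (subst nth_drop) auto
  also have "p - 1 + (?n - p) = ?n - 1" using p by auto
  also have "rev T ! (?n - 1) = T ! 0" using p by (subst rev_nth) auto
  finally have "?a ! (?n - p) = T ! 0" .
  moreover have "?b ! (?n - p) = T ! (p - q)" using p q qp unfolding rsuf_def
    by (simp add: rev_nth nth_drop)
  moreover have "T ! 0 = 1" using v unfolding valid_text_def chr_def by simp
  moreover have "p - q + 1 \<in> {2..length T}" using p q qp by auto
  then have "T ! (p - q) \<noteq> 1" using v
    unfolding valid_text_def chr_def by (metis add_diff_cancel_right')
  ultimately show False using nth by simp
qed


lemma rev_take_textpos:
  assumes k: "k \<in> {1..length T}"
  shows "rev (take (textpos T k) T) = rsuf T (SA_r T k)"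
    "length (rsuf T (SA_r T k)) = textpos T k"
proof -
  have sa: "SA_r T k \<in> {1..length T}" using SA_range[OF k] .
  have "rev (take (textpos T k) T) = drop (length T - textpos T k) (rev T)"
    by (simp add: rev_take)
  also have "length T - textpos T k = SA_r T k - 1" using sa unfolding textpos_def by auto
  finally show "rev (take (textpos T k) T) = rsuf T (SA_r T k)" unfolding rsuf_def .
  show "length (rsuf T (SA_r T k)) = textpos T k" using sa unfolding rsuf_def textpos_def by auto
qed

lemma rev_substr:
  assumes k: "k \<in> {1..length T}" and L: "L < textpos T k"
  shows "rev (substr T (textpos T k - L) (textpos T k)) = take (L + 1) (rsuf T (SA_r T k))"
proof -
  let ?t = "textpos T k"
  have tn: "?t \<le> length T" using SA_range[OF k] unfolding textpos_def by auto
  have "take (L + 1) (rsuf T (SA_r T k)) = take (L + 1) (rev (take ?t T))"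
    using rev_take_textpos(1)[OF k] by simp
  also have "rev \<dots> = drop (?t - (L + 1)) (take ?t T)"
    using tn L by (subst rev_take) simp
  also have "\<dots> = take (L + 1) (drop (?t - L - 1) T)"
    using L by (simp add: drop_take)
  also have "\<dots> = substr T (?t - L) ?t" unfolding substr_def using L
    by (simp add: Suc_diff_le)
  finally show ?thesis by (metis rev_rev_ident)
qed

lemma len_lcs: "length (lcs a b) = length (lcp (rev a) (rev b))"
  unfolding lcs_def by simp

theorem mainTheorem6:
  fixes \<sigma> :: nat and T :: "nat list" and x b j j' :: nat
  assumes "valid_text \<sigma> T"
    and "x \<in> {1..length T}"
    and "b_above T b x"
    and "run_break T (chr T x) j"
    and "j > bwt T x + b + 1"
    and "j' \<in> {j - 1, j}"
    and "BWT_r T j' = chr T x"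
  shows "length (lcs (substr T (textpos T j' - LCP_r T j) (textpos T j')) (substr T 1 x))
         \<le> length (lcs (substr T 1 x)
              (substr T (textpos T (bwt T x + b) - LCP_r T (bwt T x + b + 1))
                        (textpos T (bwt T x + b))))"
proof -
  define n where "n = length T"
  define i where "i = bwt T x"
  define s where "s = (\<lambda>k. rsuf T (SA_r T k))"
  define L where "L = LCP_r T j"
  define M where "M = LCP_r T (i + b + 1)"
  have bw: "i \<in> {1..n}" "SA_r T i = n + 1 - x" using bwt_props[OF assms(2)] unfolding i_def n_def by auto
  have ti: "textpos T i = x" using bw assms(2) unfolding textpos_def n_def by auto
  have ibn: "i + b + 1 \<le> n" using assms(3) unfolding b_above_def i_def n_def Let_def by auto
  have jn: "2 \<le> j" "j \<le> n" using assms(4) unfolding run_break_def n_def by auto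
  have j'r: "i + b + 1 \<le> j'" "j' \<le> n" using assms(5,6) jn unfolding i_def by auto
  have rng: "\<And>k. 1 \<le> k \<Longrightarrow> k \<le> n \<Longrightarrow> k \<in> {1..length T}" unfolding n_def by auto
  have x1: "rev (substr T 1 x) = s i"
  proof -
    have "substr T 1 x = take (textpos T i) T" unfolding substr_def ti by simp
    then show ?thesis using rev_take_textpos(1)[OF rng[of i]] bw unfolding s_def by auto
  qed
  have Ldef: "L = length (lcp (s (j - 1)) (s j))" unfolding L_def LCP_r_def s_def using jn by auto
  have Mdef: "M = length (lcp (s (i + b)) (s (i + b + 1)))" unfolding M_def LCP_r_def s_def using bw by auto
  have dist: "\<And>k l. 1 \<le> k \<Longrightarrow> k \<le> n \<Longrightarrow> 1 \<le> l \<Longrightarrow> l \<le> n \<Longrightarrow> k \<noteq> l \<Longrightarrow>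
     length (lcp (s k) (s l)) < textpos T k"
  proof -
    fix k l assume kl: "1 \<le> k" "k \<le> n" "1 \<le> l" "l \<le> n" "k \<noteq> l"
    have "SA_r T k \<noteq> SA_r T l" using SA_inj[OF rng rng] kl by blast
    then have "length (lcp (s k) (s l)) < length (s k)" unfolding s_def
      using rsuf_lcp_lt[OF assms(1) SA_range[OF rng] SA_range[OF rng]] kl by blast
    then show "length (lcp (s k) (s l)) < textpos T k"
      using rev_take_textpos(2)[OF rng] kl unfolding s_def by auto
  qed
  have Llt: "L < textpos T j'"
  proof (cases "j' = j")
    case True
    then show ?thesis using Ldef dist[of j "j - 1"] jn lcp_comm by auto
  next
    case False
    then have "j' = j - 1" using assms(6) by auto
    then show ?thesis using Ldef dist[of "j - 1" j] jn by auto
  qed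
  have Mlt: "M < textpos T (i + b)" using Mdef dist[of "i + b" "i + b + 1"] ibn bw by auto
  have srt: "\<And>k l. 1 \<le> k \<Longrightarrow> k \<le> l \<Longrightarrow> l \<le> n \<Longrightarrow> s k \<le> s l"
    unfolding s_def n_def using SA_sorted by blast
  have lhs: "length (lcs (substr T (textpos T j' - LCP_r T j) (textpos T j')) (substr T 1 x))
     = length (lcp (take (L + 1) (s j')) (s i))"
    unfolding len_lcs x1 L_def[symmetric] using rev_substr[OF rng Llt] j'r bw
    unfolding s_def by auto
  have rhs: "length (lcs (substr T 1 x)
              (substr T (textpos T (bwt T x + b) - LCP_r T (bwt T x + b + 1))
                        (textpos T (bwt T x + b))))
     = length (lcp (s i) (take (M + 1) (s (i + b))))"
    unfolding len_lcs x1 i_def[symmetric] M_def[symmetric] using rev_substr[OF rng Mlt] ibn bw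
    unfolding s_def by auto
  have "length (lcp (take (L + 1) (s j')) (s i)) \<le> length (lcp (s i) (s j'))"
    using lcp_take_arg[of "s i" "L + 1" "s j'"] lcp_comm by (metis min.cobounded1)
  moreover have "length (lcp (s i) (s j')) \<le> length (lcp (s i) (s (i + b)))"
    using lcp_sandwich[OF srt[of i "i + b"] srt[of "i + b" j']] bw j'r by auto
  moreover have "length (lcp (s i) (s j')) \<le> length (lcp (s (i + b)) (s j'))"
    using lcp_sandwich[OF srt[of i "i + b"] srt[of "i + b" j']] bw j'r by auto
  moreover have "length (lcp (s (i + b)) (s j')) \<le> M"
    using lcp_sandwich[OF srt[of "i + b" "i + b + 1"] srt[of "i + b + 1" j']] bw j'r Mdef by auto
  ultimately show ?thesis unfolding lhs rhs lcp_take_arg by simp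
qed

end
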